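(* Under the setting below, let $(\hat x,\hat z)$ be generated by the online strategy $\mathcal A$ with positive, nonincreasing step sizes $\eta_1\ge\eta_2\ge\dots\ge\eta_T>0$. Then $$G_T(\mathcal A)\le\frac{1}{T}\Big(\frac{\pi^2}{2}\frac{1}{\eta_T}+\Big(\frac{\Xi^2}{2}+\Xi\Psi\Big)\sum_{t=1}^T\eta_t\Big).$$ In particular, with constant step size $\eta_t=\frac{\pi}{\Xi\sqrt T}$ for all $t$, $G_T(\mathcal A)\le\frac{\pi(\Xi+\Psi)}{\sqrt T}$.
   Context: Fix an integer $T\ge 1$, a data cap $Q>0$ and an overage fee $\pi>0$; let $q=Q/T$. Fix constants $\bar d\ge 0$, $\bar r\ge 0$. For each $t\in\{1,\dots,T\}$ fix reals $d_t\in[0,\bar d]$, $r_t\in[0,\bar r]$, $c_t>0$, $p_t>0$, $\theta_t>0$, $\beta_t>0$ and functions $u_t,e_t:[0,\infty)\to\mathbb{R}$ such that: $u_t$ is continuous, increasing and strictly concave, differentiable on $(0,\infty)$, and $u_t':(0,\infty)\to(0,\infty)$ is a strictly decreasing bijection with inverse $u_t'^{-1}$; $e_t$ is increasing, strictly convex and continuously differentiable, and $e_t':[0,\infty)\to[0,\infty)$ is a strictly increasing bijection with inverse $e_t'^{-1}$. For $0\le z\le x\le 1$ let $\tilde f_t(x,z)=\theta_t u_t(x)-\beta_t e_t((x-z)c_t)-p_t c_t z$ and $\tilde h_t(x,z)=d_t x+r_t z$. For $x,z\in[0,1]^T$ with $z_t\le x_t$ define the payoff $\tilde S(x,z)=\sum_{t=1}^T\tilde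 f_t(x_t,z_t)-\pi\big[\sum_{t=1}^T\tilde h_t(x_t,z_t)-Q\big]^+$, and let $(x^*,z^* )$ be a maximizer of $\tilde S$ over $\{0\le z_t\le x_t\le 1\ \forall t\}$. For $\lambda\ge 0$ and $\beta>0$ write $a_t(\beta,\lambda)=\frac{1}{c_t}\,e_t'^{-1}\!\Big(\frac{p_tc_t+r_t\lambda}{\beta c_t}\Big)$ and $X_t(\lambda)=p_tc_t+(d_t+r_t)\lambda$. Define the sets (all with $\beta>0$): $\Omega^{I}_t(\lambda)=\{(\beta,\theta):\theta>\frac{\beta c_t e_t'(c_t)+d_t\lambda}{u_t'(1)},\ \beta<\frac{p_tc_t+r_t\lambda}{c_te_t'(c_t)}\}$; $\Omega^{II}_t(\lambda)=\{(\beta,\theta):\theta>\frac{X_t(\lambda)}{u_t'(1)},\ \beta\ge\frac{p_tc_t+r_t\lambda}{c_te_t'(c_t)}\}$; $\Omega^{III}_t(\lambda)=\{(\beta,\theta):\frac{X_t(\lambda)}{u_t'(a_t(\beta,\lambda))}\le\theta\le\frac{X_t(\lambda)}{u_t'(1)}\}$; $\Omega^{IV}_t(\lambda)=\{(\beta,\theta):\theta<\frac{X_t(\lambda)}{u_t'(a_t(\beta,\lambda))},\ \theta\le\frac{\beta c_te_t'(c_t)+d_t\lambda}{u_t'(1)}\}$. Let $z^{II}_t(\lambda)=1-a_t(\beta_t,\lambda)$, $x^{III}_t(\lambda)=u_t'^{-1}(X_t(\lambda)/\theta_t)$, $z^{III}_t(\lambda)=x^{III}_t(\lambda)-a_t(\beta_t,\lambda)$,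 and let $x^{IV}_t(\lambda)\in(0,1]$ be the solution of $\theta_tu_t'(x)-\beta_tc_te_t'(xc_t)=d_t\lambda$. Define $W_t(\lambda)=(1,0)$ if $(\beta_t,\theta_t)\in\Omega^I_t(\lambda)$; $(1,z^{II}_t(\lambda))$ if in $\Omega^{II}_t(\lambda)$; $(x^{III}_t(\lambda),z^{III}_t(\lambda))$ if in $\Omega^{III}_t(\lambda)$; $(x^{IV}_t(\lambda),0)$ if in $\Omega^{IV}_t(\lambda)$. Online strategy $\mathcal A$: set $\hat\lambda_1=0$; for $t=1,\dots,T$ set $(\hat x_t,\hat z_t)=W_t(\hat\lambda_t)$ and $\hat\lambda_{t+1}=\mathcal P_{[0,\pi]}\big(\hat\lambda_t+\eta_t[\tilde h_t(\hat x_t,\hat z_t)-q]\big)$, where $\mathcal P_{[0,\pi]}$ is the projection onto $[0,\pi]$. The payoff gap is $G_T(\mathcal A)=\frac1T[\tilde S(x^*,z^* )-\tilde S(\hat x,\hat z)]$. Maximal demand divergence: $\Xi=\max(|q-\bar d-\bar r|,q)$. Consumption fluctuation: with $l_t=q-\tilde h_t(x_t^*,z_t^* )$, $\bar l=\frac1T\sum_{t=1}^Tl_t$, $\psi_t=|t\bar l-\sum_{i=1}^tl_i|$, set $\Psi=\max_{1\le t\le T}\psi_t$. *)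

theory Defs
  imports "HOL-Analysis.Analysis"
begin

definition strict_convex_on :: "real set \<Rightarrow> (real \<Rightarrow> real) \<Rightarrow> bool" where
  "strict_convex_on S f \<longleftrightarrow> convex S \<and>
     (\<forall>x\<in>S. \<forall>y\<in>S. \<forall>a. x \<noteq> y \<and> 0 < a \<and> a < 1 \<longrightarrow>
        f (a * x + (1 - a) * y) < a * f x + (1 - a) * f y)"

definition strict_concave_on :: "real set \<Rightarrow> (real \<Rightarrow> real) \<Rightarrow> bool" where
  "strict_concave_on S f \<longleftrightarrow> strict_convex_on S (\<lambda>x. - f x)"

definition proj :: "real \<Rightarrow> real \<Rightarrow> real" where
  "proj fee v = max 0 (min fee v)"

definition hfun :: "(nat \<Rightarrow> real) \<Rightarrow> (nat \<Rightarrow> real) \<Rightarrow> nat \<Rightarrow> real \<Rightarrow> real \<Rightarrow> real" where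
  "hfun d r t x z = d t * x + r t * z"

definition ffun :: "(nat \<Rightarrow> real \<Rightarrow> real) \<Rightarrow> (nat \<Rightarrow> real \<Rightarrow> real) \<Rightarrow> (nat \<Rightarrow> real) \<Rightarrow> (nat \<Rightarrow> real)
    \<Rightarrow> (nat \<Rightarrow> real) \<Rightarrow> (nat \<Rightarrow> real) \<Rightarrow> nat \<Rightarrow> real \<Rightarrow> real \<Rightarrow> real" where
  "ffun u e c p \<theta> \<beta> t x z = \<theta> t * u t x - \<beta> t * e t ((x - z) * c t) - p t * c t * z"

definition Spay :: "nat \<Rightarrow> real \<Rightarrow> real \<Rightarrow> (nat \<Rightarrow> real \<Rightarrow> real) \<Rightarrow> (nat \<Rightarrow> real \<Rightarrow> real)
    \<Rightarrow> (nat \<Rightarrow> real) \<Rightarrow> (nat \<Rightarrow> real) \<Rightarrow> (nat \<Rightarrow> real) \<Rightarrow> (nat \<Rightarrow> real) \<Rightarrow> (nat \<Rightarrow> real) \<Rightarrow> (nat \<Rightarrow> real)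
    \<Rightarrow> (nat \<Rightarrow> real) \<Rightarrow> (nat \<Rightarrow> real) \<Rightarrow> real" where
  "Spay T Q fee u e c p \<theta> \<beta> d r x z =
     (\<Sum>t=1..T. ffun u e c p \<theta> \<beta> t (x t) (z t))
     - fee * max 0 ((\<Sum>t=1..T. hfun d r t (x t) (z t)) - Q)"

definition feasible :: "nat \<Rightarrow> (nat \<Rightarrow> real) \<Rightarrow> (nat \<Rightarrow> real) \<Rightarrow> bool" where
  "feasible T x z \<longleftrightarrow> (\<forall>t\<in>{1..T}. 0 \<le> z t \<and> z t \<le> x t \<and> x t \<le> 1)"

definition a_fn :: "(nat \<Rightarrow> real \<Rightarrow> real) \<Rightarrow> (nat \<Rightarrow> real) \<Rightarrow> (nat \<Rightarrow> real) \<Rightarrow> (nat \<Rightarrow> real)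
    \<Rightarrow> nat \<Rightarrow> real \<Rightarrow> real \<Rightarrow> real" where
  "a_fn e' c p r t b l = (1 / c t) * inv_into {0..} (e' t) ((p t * c t + r t * l) / (b * c t))"

definition X_fn :: "(nat \<Rightarrow> real) \<Rightarrow> (nat \<Rightarrow> real) \<Rightarrow> (nat \<Rightarrow> real) \<Rightarrow> (nat \<Rightarrow> real) \<Rightarrow> nat \<Rightarrow> real \<Rightarrow> real" where
  "X_fn c p d r t l = p t * c t + (d t + r t) * l"

definition OmegaI where
  "OmegaI u' e' c p d r t l b th \<longleftrightarrow> b > 0 \<and>
     th > (b * c t * e' t (c t) + d t * l) / u' t 1 \<and>
     b < (p t * c t + r t * l) / (c t * e' t (c t))"

definition OmegaII where
  "OmegaII u' e' c p d r t l b th \<longleftrightarrow> b > 0 \<and>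
     th > X_fn c p d r t l / u' t 1 \<and>
     b \<ge> (p t * c t + r t * l) / (c t * e' t (c t))"

definition OmegaIII where
  "OmegaIII u' e' c p d r t l b th \<longleftrightarrow> b > 0 \<and>
     X_fn c p d r t l / u' t (a_fn e' c p r t b l) \<le> th \<and>
     th \<le> X_fn c p d r t l / u' t 1"

definition OmegaIV where
  "OmegaIV u' e' c p d r t l b th \<longleftrightarrow> b > 0 \<and>
     th < X_fn c p d r t l / u' t (a_fn e' c p r t b l) \<and>
     th \<le> (b * c t * e' t (c t) + d t * l) / u' t 1"

definition W_fn :: "(nat \<Rightarrow> real \<Rightarrow> real) \<Rightarrow> (nat \<Rightarrow> real \<Rightarrow> real) \<Rightarrow> (nat \<Rightarrow> real) \<Rightarrow> (nat \<Rightarrow> real)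
    \<Rightarrow> (nat \<Rightarrow> real) \<Rightarrow> (nat \<Rightarrow> real) \<Rightarrow> (nat \<Rightarrow> real) \<Rightarrow> (nat \<Rightarrow> real) \<Rightarrow> nat \<Rightarrow> real \<Rightarrow> real \<times> real" where
  "W_fn u' e' c p d r \<theta> \<beta> t l =
    (if OmegaI u' e' c p d r t l (\<beta> t) (\<theta> t) then (1, 0)
     else if OmegaII u' e' c p d r t l (\<beta> t) (\<theta> t) then (1, 1 - a_fn e' c p r t (\<beta> t) l)
     else if OmegaIII u' e' c p d r t l (\<beta> t) (\<theta> t) then
       (inv_into {0<..} (u' t) (X_fn c p d r t l / \<theta> t),
        inv_into {0<..} (u' t) (X_fn c p d r t l / \<theta> t) - a_fn e' c p r t (\<beta> t) l)
     else if OmegaIV u' e' c p d r t l (\<beta> t) (\<theta> t) then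
       (THE x. 0 < x \<and> x \<le> 1 \<and>
          \<theta> t * u' t x - \<beta> t * c t * e' t (x * c t) = d t * l, 0)
     else undefined)"

(* dual iterates: lam_seq n = hat-lambda_{n+1}; hat-lambda_1 = 0 *)
primrec lam_seq :: "nat \<Rightarrow> real \<Rightarrow> real \<Rightarrow> (nat \<Rightarrow> real \<Rightarrow> real) \<Rightarrow> (nat \<Rightarrow> real \<Rightarrow> real) \<Rightarrow> (nat \<Rightarrow> real)
    \<Rightarrow> (nat \<Rightarrow> real) \<Rightarrow> (nat \<Rightarrow> real) \<Rightarrow> (nat \<Rightarrow> real) \<Rightarrow> (nat \<Rightarrow> real) \<Rightarrow> (nat \<Rightarrow> real)
    \<Rightarrow> (nat \<Rightarrow> real) \<Rightarrow> nat \<Rightarrow> real" where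
  "lam_seq T Q fee u' e' c p d r \<theta> \<beta> \<eta> 0 = 0"
| "lam_seq T Q fee u' e' c p d r \<theta> \<beta> \<eta> (Suc n) =
     (let l = lam_seq T Q fee u' e' c p d r \<theta> \<beta> \<eta> n;
          w = W_fn u' e' c p d r \<theta> \<beta> (Suc n) l
      in proj fee (l + \<eta> (Suc n) * (hfun d r (Suc n) (fst w) (snd w) - Q / real T)))"

definition online_dec where
  "online_dec T Q fee u' e' c p d r \<theta> \<beta> \<eta> t =
     W_fn u' e' c p d r \<theta> \<beta> t (lam_seq T Q fee u' e' c p d r \<theta> \<beta> \<eta> (t - 1))"

definition gap where
  "gap T Q fee u e u' e' c p d r \<theta> \<beta> \<eta> xs zs =
     (Spay T Q fee u e c p \<theta> \<beta> d r xs zs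
      - Spay T Q fee u e c p \<theta> \<beta> d r
          (\<lambda>t. fst (online_dec T Q fee u' e' c p d r \<theta> \<beta> \<eta> t))
          (\<lambda>t. snd (online_dec T Q fee u' e' c p d r \<theta> \<beta> \<eta> t))) / real T"

definition Xi :: "nat \<Rightarrow> real \<Rightarrow> real \<Rightarrow> real \<Rightarrow> real" where
  "Xi T Q dbar rbar = max \<bar>Q / real T - dbar - rbar\<bar> (Q / real T)"

definition Psi :: "nat \<Rightarrow> real \<Rightarrow> (nat \<Rightarrow> real) \<Rightarrow> (nat \<Rightarrow> real) \<Rightarrow> (nat \<Rightarrow> real) \<Rightarrow> (nat \<Rightarrow> real) \<Rightarrow> real" where
  "Psi T Q d r xs zs =
     (let l = (\<lambda>t. Q / real T - hfun d r t (xs t) (zs t));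
          lbar = (\<Sum>t=1..T. l t) / real T
      in Max ((\<lambda>t. \<bar>real t * lbar - (\<Sum>i=1..t. l i)\<bar>) ` {1..T}))"

end

theory Submission
  imports Defs
begin


lemma convex_of_strict: fixes f :: "real \<Rightarrow> real" assumes "strict_convex_on S f" shows "convex_on S f"
proof (rule convex_onI)
  show "convex S" using assms unfolding strict_convex_on_def by auto
next
  fix t x y :: real assume t: "0 < t" "t < 1" and xy: "x \<in> S" "y \<in> S"
  show "f ((1 - t) *\<^sub>R x + t *\<^sub>R y) \<le> (1 - t) * f x + t * f y"
  proof (cases "x = y")
    case True thus ?thesis by (simp add: algebra_simps)
  next
    case False
    have H: "\<forall>x\<in>S. \<forall>y\<in>S. \<forall>a. x \<noteq> y \<and> 0 < a \<and> a < 1 \<longrightarrow>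
        f (a * x + (1 - a) * y) < a * f x + (1 - a) * f y" using assms unfolding strict_convex_on_def by blast
    have "f ((1-t) * x + (1 - (1-t)) * y) < (1-t) * f x + (1 - (1-t)) * f y"
      using H[rule_format, of x y "1-t"] False t xy by linarith
    thus ?thesis by simp
  qed
qed

lemma u_tangent:
  fixes U U' :: "real \<Rightarrow> real"
  assumes "strict_concave_on {0..} U" "\<forall>x>0. (U has_real_derivative U' x) (at x)"
    "x0 > 0" "x \<ge> 0"
  shows "U x \<le> U x0 + U' x0 * (x - x0)"
proof -
  have cv: "convex_on {0..} (\<lambda>x. - U x)"
    using assms(1) convex_of_strict unfolding strict_concave_on_def by blast
  have d: "((\<lambda>x. - U x) has_field_derivative - U' x0) (at x0 within {0..})"
  proof -
    have "(U has_real_derivative U' x0) (at x0)" using assms(2,3) by blast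
    hence "((\<lambda>x. - U x) has_real_derivative - U' x0) (at x0)" by (rule DERIV_minus)
    thus ?thesis by (rule has_field_derivative_at_within)
  qed
  have i: "x0 \<in> interior {0..}" using assms(3) by simp
  have "(- U x) - (- U x0) \<ge> - U' x0 * (x - x0)"
    by (rule convex_on_imp_above_tangent[OF cv connected_Ici i _ d]) (use assms(4) in simp)
  thus ?thesis by simp
qed

lemma e'_zero:
  fixes E' :: "real \<Rightarrow> real"
  assumes "strict_mono_on {0..} E'" "bij_betw E' {0..} {0..}"
  shows "E' 0 = 0"
proof -
  have "0 \<in> E' ` {0..}" using assms(2) by (simp add: bij_betw_def)
  then obtain y where y: "y \<ge> 0" "E' y = 0" by auto
  have "E' 0 \<ge> 0" using assms(2) by (auto simp: bij_betw_def)
  show ?thesis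
  proof (cases "y = 0")
    case True thus ?thesis using y by simp
  next
    case False
    have "E' 0 < E' y" using strict_mono_onD[OF assms(1), of 0 y] y False by simp
    thus ?thesis using y \<open>E' 0 \<ge> 0\<close> by simp
  qed
qed

lemma e_tangent:
  fixes E E' :: "real \<Rightarrow> real"
  assumes "strict_convex_on {0..} E" "\<forall>x\<ge>0. (E has_real_derivative E' x) (at x within {0..})"
    "mono_on {0..} E" "strict_mono_on {0..} E'" "bij_betw E' {0..} {0..}"
    "y0 \<ge> 0" "y \<ge> 0"
  shows "E y \<ge> E y0 + E' y0 * (y - y0)"
proof (cases "y0 = 0")
  case True
  have "E 0 \<le> E y" using assms(3,7) by (auto simp: mono_on_def)
  thus ?thesis using True e'_zero[OF assms(4,5)] by simp
next
  case False
  have i: "y0 \<in> interior {0..}" using assms(6) False by simp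
  have d: "(E has_real_derivative E' y0) (at y0 within {0..})" using assms(2,6) by blast
  have "E y - E y0 \<ge> E' y0 * (y - y0)"
    by (rule convex_on_imp_above_tangent[OF convex_of_strict[OF assms(1)] connected_Ici i _ d]) (use assms(7) in simp)
  thus ?thesis by simp
qed

lemma inv_cont:
  fixes U' :: "real \<Rightarrow> real"
  assumes dec: "\<forall>x y. 0 < x \<and> x < y \<longrightarrow> U' y < U' x" and bij: "bij_betw U' {0<..} {0<..}"
    and x0: "x0 > 0"
  shows "isCont U' x0"
proof -
  have decr: "\<And>x y. 0 < x \<Longrightarrow> x < y \<Longrightarrow> U' y < U' x" using dec by blast
  have img: "U' ` {0<..} = {0<..}" using bij by (simp add: bij_betw_def)
  have pos: "U' x0 > 0" using img x0 by auto
  show ?thesis unfolding continuous_at_eps_delta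
  proof (intro allI impI)
    fix \<epsilon> :: real assume e: "\<epsilon> > 0"
    define v1 where "v1 = U' x0 + \<epsilon>"
    define v2 where "v2 = max (U' x0 - \<epsilon>) (U' x0 / 2)"
    have v1: "v1 > U' x0" "v1 > 0" using pos e v1_def by auto
    have v2: "v2 < U' x0" "v2 > 0" "v2 \<ge> U' x0 - \<epsilon>" using pos e v2_def by auto
    have "v1 \<in> U' ` {0<..}" using img v1 by auto
    then obtain x1 where x1: "x1 > 0" "U' x1 = v1" by auto
    have "v2 \<in> U' ` {0<..}" using img v2 by auto
    then obtain x2 where x2: "x2 > 0" "U' x2 = v2" by auto
    have "x1 < x0"
    proof (rule ccontr)
      assume "\<not> x1 < x0"
      hence "x1 = x0 \<or> x0 < x1" by linarith
      moreover have "x0 < x1 \<Longrightarrow> U' x1 < U' x0" using decr x0 by blast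
      ultimately show False using x1 v1 by auto
    qed
    have "x0 < x2"
    proof (rule ccontr)
      assume "\<not> x0 < x2"
      hence "x2 = x0 \<or> x2 < x0" by linarith
      moreover have "x2 < x0 \<Longrightarrow> U' x0 < U' x2" using decr x2 by blast
      ultimately show False using x2 v2 by auto
    qed
    show "\<exists>d>0. \<forall>x. dist x x0 < d \<longrightarrow> dist (U' x) (U' x0) < \<epsilon>"
    proof (intro exI[of _ "min (x0 - x1) (x2 - x0)"] conjI allI impI)
      show "min (x0 - x1) (x2 - x0) > 0" using \<open>x1 < x0\<close> \<open>x0 < x2\<close> by auto
      fix x assume "dist x x0 < min (x0 - x1) (x2 - x0)"
      hence xx: "x1 < x" "x < x2" by (auto simp: dist_real_def)
      have "U' x < v1" using decr[OF x1(1) xx(1)] x1 by simp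
      moreover have "v2 < U' x" using decr[of x x2] xx x1 x2 by simp
      ultimately show "dist (U' x) (U' x0) < \<epsilon>" using v1_def v2 unfolding dist_real_def by linarith
    qed
  qed
qed



locale per_t =
  fixes u e u' e' :: "nat \<Rightarrow> real \<Rightarrow> real" and c p \<theta> \<beta> d r :: "nat \<Rightarrow> real" and t :: nat
  assumes c: "c t > 0" and p: "p t > 0" and th: "\<theta> t > 0" and b: "\<beta> t > 0"
    and d: "d t \<ge> 0" and r: "r t \<ge> 0"
    and uc: "strict_concave_on {0..} (u t)"
    and ud: "\<forall>x>0. (u t has_real_derivative u' t x) (at x)"
    and udec: "\<forall>x y. 0 < x \<and> x < y \<longrightarrow> u' t y < u' t x"
    and ubij: "bij_betw (u' t) {0<..} {0<..}"
    and em: "mono_on {0..} (e t)" and ec: "strict_convex_on {0..} (e t)"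
    and ed: "\<forall>x\<ge>0. (e t has_real_derivative e' t x) (at x within {0..})"
    and e'c: "continuous_on {0..} (e' t)" and ei: "strict_mono_on {0..} (e' t)"
    and eb: "bij_betw (e' t) {0..} {0..}"
begin

definition F where "F l x z = ffun u e c p \<theta> \<beta> t x z - l * hfun d r t x z"

lemma key:
  assumes x0: "x0 > 0" and z0: "0 \<le> z0" "z0 \<le> x0" and xz: "0 \<le> z" "z \<le> x"
  shows "F l x z \<le> F l x0 z0 + (\<theta> t * u' t x0 - X_fn c p d r t l) * (x - x0)
      + (p t * c t + r t * l - \<beta> t * c t * e' t ((x0 - z0) * c t)) * ((x - z) - (x0 - z0))"
proof -
  have t1: "u t x \<le> u t x0 + u' t x0 * (x - x0)"
    by (rule u_tangent[OF uc ud x0]) (use xz in simp)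
  have t2: "e t ((x - z) * c t) \<ge> e t ((x0 - z0) * c t) + e' t ((x0 - z0) * c t) * ((x - z) * c t - (x0 - z0) * c t)"
    by (rule e_tangent[OF ec ed em ei eb]) (use z0 xz c in simp_all)
  have m1: "\<theta> t * u t x \<le> \<theta> t * (u t x0 + u' t x0 * (x - x0))"
    using t1 th by (simp add: mult_left_mono)
  have m2: "\<beta> t * e t ((x - z) * c t) \<ge> \<beta> t * (e t ((x0 - z0) * c t) + e' t ((x0 - z0) * c t) * ((x - z) * c t - (x0 - z0) * c t))"
    using t2 b by (simp add: mult_left_mono)
  show ?thesis using m1 m2 unfolding F_def ffun_def hfun_def X_fn_def
    by (simp add: algebra_simps)
qed

definition opt where "opt l x0 z0 \<longleftrightarrow> 0 \<le> z0 \<and> z0 \<le> x0 \<and> x0 \<le> 1 \<and>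
   (\<forall>x z. 0 \<le> z \<and> z \<le> x \<and> x \<le> 1 \<longrightarrow> F l x z \<le> F l x0 z0)"

lemma e'0: "e' t 0 = 0" by (rule e'_zero[OF ei eb])

lemma e'_less: "0 \<le> x \<Longrightarrow> x < y \<Longrightarrow> e' t x < e' t y"
  using strict_mono_onD[OF ei, of x y] by simp

lemma e'_le_imp: "0 \<le> x \<Longrightarrow> 0 \<le> y \<Longrightarrow> e' t x \<le> e' t y \<Longrightarrow> x \<le> y"
  using e'_less[of y x] by force

lemma e'_mono: "0 \<le> x \<Longrightarrow> x \<le> y \<Longrightarrow> e' t x \<le> e' t y"
  using e'_less[of x y] by (cases "x = y") auto

lemma e'_nonneg: "0 \<le> x \<Longrightarrow> 0 \<le> e' t x"
  using e'_mono[of 0 x] e'0 by simp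

lemma e'c_pos: "e' t (c t) > 0"
  using e'_less[of 0 "c t"] e'0 c by simp

lemma u'_less: "0 < x \<Longrightarrow> x < y \<Longrightarrow> u' t y < u' t x"
  using udec by blast

lemma u'_pos: "0 < x \<Longrightarrow> u' t x > 0"
  using ubij by (auto simp: bij_betw_def)

lemma u'_le_imp: "0 < x \<Longrightarrow> 0 < y \<Longrightarrow> u' t x \<le> u' t y \<Longrightarrow> y \<le> x"
  using u'_less[of x y] by force

lemma u'_anti: "0 < x \<Longrightarrow> x \<le> y \<Longrightarrow> u' t y \<le> u' t x"
  using u'_less[of x y] by (cases "x = y") auto

lemma u'_inv: assumes "v > 0" shows "inv_into {0<..} (u' t) v > 0" "u' t (inv_into {0<..} (u' t) v) = v"
proof -
  have "v \<in> u' t ` {0<..}" using ubij assms by (simp add: bij_betw_def)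
  thus "inv_into {0<..} (u' t) v > 0" "u' t (inv_into {0<..} (u' t) v) = v"
    using inv_into_into[of v "u' t" "{0<..}"] f_inv_into_f[of v "u' t" "{0<..}"] by auto
qed

definition K where "K l = p t * c t + r t * l"
definition AA where "AA l = inv_into {0..} (e' t) (K l / (\<beta> t * c t))"

lemma K_pos: "l \<ge> 0 \<Longrightarrow> K l > 0"
  unfolding K_def using p c r by (simp add: add_pos_nonneg)

lemma AA: assumes "l \<ge> 0" shows "AA l > 0" "e' t (AA l) = K l / (\<beta> t * c t)"
proof -
  have v: "K l / (\<beta> t * c t) > 0" using K_pos[OF assms] b c by simp
  hence "K l / (\<beta> t * c t) \<in> e' t ` {0..}" using eb by (simp add: bij_betw_def)
  hence 1: "AA l \<ge> 0" and 2: "e' t (AA l) = K l / (\<beta> t * c t)"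
    unfolding AA_def using inv_into_into[of _ "e' t" "{0..}"] f_inv_into_f[of _ "e' t" "{0..}"] by auto
  show "e' t (AA l) = K l / (\<beta> t * c t)" by (rule 2)
  show "AA l > 0"
  proof (rule ccontr)
    assume "\<not> AA l > 0" hence "AA l = 0" using 1 by simp
    hence "K l / (\<beta> t * c t) = 0" using 2 e'0 by simp
    thus False using v by linarith
  qed
qed

lemma a_eq: "a_fn e' c p r t (\<beta> t) l = AA l / c t"
  unfolding a_fn_def AA_def K_def by simp

lemma a_c: "a_fn e' c p r t (\<beta> t) l * c t = AA l"
  unfolding a_eq using c by simp

lemma X_eq: "X_fn c p d r t l = K l + d t * l"
  unfolding X_fn_def K_def by (simp add: algebra_simps)

lemma X_pos: "l \<ge> 0 \<Longrightarrow> X_fn c p d r t l > 0"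
  unfolding X_eq using K_pos d by (simp add: add_pos_nonneg)

lemma K_AA: "l \<ge> 0 \<Longrightarrow> \<beta> t * c t * e' t (AA l) = K l"
  using AA(2)[of l] b c by simp

lemma regI: assumes l: "l \<ge> 0" and O: "OmegaI u' e' c p d r t l (\<beta> t) (\<theta> t)" shows "opt l 1 0"
proof -
  have u1: "u' t 1 > 0" using u'_pos by simp
  have ce: "c t * e' t (c t) > 0" using c e'c_pos by simp
  have h1: "\<theta> t * u' t 1 > \<beta> t * c t * e' t (c t) + d t * l"
    using O u1 unfolding OmegaI_def by (simp add: pos_divide_less_eq mult.commute)
  have h2: "\<beta> t * c t * e' t (c t) < K l"
    using O ce unfolding OmegaI_def K_def by (simp add: less_divide_eq mult.commute mult.left_commute)
  show ?thesis unfolding opt_def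
  proof (intro conjI allI impI)
    fix x z :: real assume xz: "0 \<le> z \<and> z \<le> x \<and> x \<le> 1"
    have k: "F l x z \<le> F l 1 0 + (\<theta> t * u' t 1 - X_fn c p d r t l) * (x - 1)
      + (p t * c t + r t * l - \<beta> t * c t * e' t ((1 - 0) * c t)) * ((x - z) - (1 - 0))"
      by (rule key) (use xz in auto)
    define A where "A = \<theta> t * u' t 1 - X_fn c p d r t l"
    define B where "B = K l - \<beta> t * c t * e' t (c t)"
    have AB: "A + B > 0" unfolding A_def B_def X_eq using h1 by simp
    have B: "B > 0" unfolding B_def using h2 by simp
    have 1: "(A + B) * (x - 1) \<le> 0" using AB xz by (intro mult_nonneg_nonpos) auto
    have 2: "B * z \<ge> 0" using B xz by simp
    have 3: "A * (x - 1) + B * ((x - z) - 1) = (A + B) * (x - 1) - B * z" by (simp add: algebra_simps)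
    show "F l x z \<le> F l 1 0" using k 1 2 3 unfolding A_def B_def K_def by simp
  qed auto
qed

lemma regII: assumes l: "l \<ge> 0" and O: "OmegaII u' e' c p d r t l (\<beta> t) (\<theta> t)"
  shows "opt l 1 (1 - a_fn e' c p r t (\<beta> t) l)"
proof -
  define a where "a = a_fn e' c p r t (\<beta> t) l"
  have u1: "u' t 1 > 0" using u'_pos by simp
  have ce: "c t * e' t (c t) > 0" using c e'c_pos by simp
  have h1: "\<theta> t * u' t 1 > X_fn c p d r t l"
    using O u1 unfolding OmegaII_def by (simp add: pos_divide_less_eq)
  have h2: "\<beta> t * c t * e' t (c t) \<ge> K l"
    using O ce unfolding OmegaII_def K_def by (simp add: divide_le_eq mult.commute mult.left_commute)
  have "e' t (AA l) \<le> e' t (c t)" using h2 K_AA[OF l] b c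
    by (metis AA(2) l divide_le_eq mult_pos_pos mult.commute mult.left_commute)
  hence "AA l \<le> c t" using e'_le_imp AA(1)[OF l] c by simp
  hence a1: "a \<le> 1" unfolding a_def a_eq using c by simp
  have a0: "a > 0" unfolding a_def a_eq using c AA(1)[OF l] by simp
  show ?thesis unfolding a_def[symmetric] opt_def
  proof (intro conjI allI impI)
    fix x z :: real assume xz: "0 \<le> z \<and> z \<le> x \<and> x \<le> 1"
    have k: "F l x z \<le> F l 1 (1 - a) + (\<theta> t * u' t 1 - X_fn c p d r t l) * (x - 1)
      + (p t * c t + r t * l - \<beta> t * c t * e' t ((1 - (1 - a)) * c t)) * ((x - z) - (1 - (1 - a)))"
      by (rule key) (use xz a0 a1 in auto)
    have e: "(1 - (1 - a)) * c t = AA l" using a_c[of l] unfolding a_def by simp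
    have z: "p t * c t + r t * l - \<beta> t * c t * e' t (AA l) = 0" using K_AA[OF l] unfolding K_def by simp
    have 1: "(\<theta> t * u' t 1 - X_fn c p d r t l) * (x - 1) \<le> 0" using h1 xz by (intro mult_nonneg_nonpos) auto
    show "F l x z \<le> F l 1 (1 - a)" using k 1 unfolding e z by simp
  qed (use a0 a1 in auto)
qed

lemma regIII: assumes l: "l \<ge> 0" and O: "OmegaIII u' e' c p d r t l (\<beta> t) (\<theta> t)"
  shows "opt l (inv_into {0<..} (u' t) (X_fn c p d r t l / \<theta> t))
      (inv_into {0<..} (u' t) (X_fn c p d r t l / \<theta> t) - a_fn e' c p r t (\<beta> t) l)"
proof -
  define a where "a = a_fn e' c p r t (\<beta> t) l"
  define X where "X = X_fn c p d r t l"
  define x0 where "x0 = inv_into {0<..} (u' t) (X / \<theta> t)"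
  have Xp: "X > 0" unfolding X_def using X_pos[OF l] .
  have x0: "x0 > 0" "u' t x0 = X / \<theta> t" unfolding x0_def using u'_inv[of "X / \<theta> t"] Xp th by auto
  have a0: "a > 0" unfolding a_def a_eq using c AA(1)[OF l] by simp
  have u1: "u' t 1 > 0" using u'_pos by simp
  have ua: "u' t a > 0" using u'_pos a0 by simp
  have "X / u' t a \<le> \<theta> t" using O unfolding OmegaIII_def X_def a_def by simp
  hence "X / \<theta> t \<le> u' t a" using ua th by (simp add: divide_le_eq mult.commute)
  hence ax: "a \<le> x0" using u'_le_imp[of x0 a] x0 a0 by simp
  have "\<theta> t \<le> X / u' t 1" using O unfolding OmegaIII_def X_def by simp
  hence "u' t 1 \<le> X / \<theta> t" using u1 th by (simp add: le_divide_eq mult.commute)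
  hence x1: "x0 \<le> 1" using u'_le_imp[of 1 x0] x0 by simp
  show ?thesis unfolding a_def[symmetric] X_def[symmetric] x0_def[symmetric] opt_def
  proof (intro conjI allI impI)
    fix x z :: real assume xz: "0 \<le> z \<and> z \<le> x \<and> x \<le> 1"
    have k: "F l x z \<le> F l x0 (x0 - a) + (\<theta> t * u' t x0 - X_fn c p d r t l) * (x - x0)
      + (p t * c t + r t * l - \<beta> t * c t * e' t ((x0 - (x0 - a)) * c t)) * ((x - z) - (x0 - (x0 - a)))"
      by (rule key) (use xz a0 ax x0 in auto)
    have e: "(x0 - (x0 - a)) * c t = AA l" using a_c[of l] unfolding a_def by simp
    have z: "p t * c t + r t * l - \<beta> t * c t * e' t (AA l) = 0" using K_AA[OF l] unfolding K_def by simp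
    have z2: "\<theta> t * u' t x0 - X_fn c p d r t l = 0" using x0 th unfolding X_def by simp
    show "F l x z \<le> F l x0 (x0 - a)" using k unfolding e z z2 by simp
  qed (use a0 ax x1 in auto)
qed

lemma regIV: assumes l: "l \<ge> 0" and O: "OmegaIV u' e' c p d r t l (\<beta> t) (\<theta> t)"
  shows "opt l (THE x. 0 < x \<and> x \<le> 1 \<and>
          \<theta> t * u' t x - \<beta> t * c t * e' t (x * c t) = d t * l) 0"
proof -
  define a where "a = a_fn e' c p r t (\<beta> t) l"
  define X where "X = X_fn c p d r t l"
  define \<phi> where "\<phi> x = \<theta> t * u' t x - \<beta> t * c t * e' t (x * c t)" for x
  have Xp: "X > 0" unfolding X_def using X_pos[OF l] .
  have a0: "a > 0" unfolding a_def a_eq using c AA(1)[OF l] by simp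
  have u1: "u' t 1 > 0" using u'_pos by simp
  have ua: "u' t a > 0" using u'_pos a0 by simp
  have O1: "\<theta> t < X / u' t a" using O unfolding OmegaIV_def X_def a_def by simp
  have O2: "\<theta> t * u' t 1 \<le> \<beta> t * c t * e' t (c t) + d t * l"
    using O u1 unfolding OmegaIV_def by (simp add: le_divide_eq)
  have phidec: "\<phi> y < \<phi> x" if "0 < x" "x < y" for x y
  proof -
    have "u' t y < u' t x" using u'_less that by simp
    hence 1: "\<theta> t * u' t y < \<theta> t * u' t x" using th by simp
    have "e' t (x * c t) < e' t (y * c t)" using e'_less[of "x * c t" "y * c t"] that c by simp
    hence 2: "\<beta> t * c t * e' t (x * c t) < \<beta> t * c t * e' t (y * c t)" using b c by simp
    show ?thesis unfolding \<phi>_def using 1 2 by simp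
  qed
  define v where "v = (d t * l + \<beta> t * c t * e' t (c t) + 1) / \<theta> t"
  have vp: "v > 0" unfolding v_def using th d l b c e'c_pos
    by (intro divide_pos_pos add_nonneg_pos) (auto intro!: add_nonneg_nonneg)
  define a1 where "a1 = inv_into {0<..} (u' t) v"
  have a1: "a1 > 0" "u' t a1 = v" unfolding a1_def using u'_inv vp by auto
  have tv: "\<theta> t * v = d t * l + \<beta> t * c t * e' t (c t) + 1" unfolding v_def using th by simp
  have a1_lt: "a1 < 1"
  proof (rule ccontr)
    assume "\<not> a1 < 1"
    hence "u' t a1 \<le> u' t 1" using u'_anti[of 1 a1] by simp
    hence "\<theta> t * u' t a1 \<le> \<theta> t * u' t 1" using th by simp
    thus False using O2 tv a1 by simp
  qed
  have "e' t (a1 * c t) \<le> e' t (c t)" using e'_mono[of "a1 * c t" "c t"] a1 a1_lt c by simp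
  hence "\<beta> t * c t * e' t (a1 * c t) \<le> \<beta> t * c t * e' t (c t)" using b c by simp
  hence phia1: "\<phi> a1 \<ge> d t * l" unfolding \<phi>_def using a1 tv by simp
  have phi1: "\<phi> 1 \<le> d t * l" unfolding \<phi>_def using O2 by simp
  have cont: "\<forall>x. a1 \<le> x \<and> x \<le> 1 \<longrightarrow> isCont \<phi> x"
  proof (intro allI impI)
    fix x assume x: "a1 \<le> x \<and> x \<le> 1"
    hence xp: "x > 0" using a1 by simp
    have h1: "isCont (u' t) x" by (rule inv_cont[OF udec ubij xp])
    have "x * c t \<in> interior {0..}" using xp c by simp
    hence "isCont (e' t) (x * c t)" using continuous_on_interior[OF e'c] by blast
    hence h2: "isCont (\<lambda>x. e' t (x * c t)) x"
      by (intro isCont_o2[where f = "\<lambda>x. x * c t" and g = "e' t"]) (auto intro!: continuous_intros)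
    show "isCont \<phi> x" unfolding \<phi>_def by (intro continuous_intros h1 h2)
  qed
  obtain xs where xs: "a1 \<le> xs" "xs \<le> 1" "\<phi> xs = d t * l"
    using IVT2[of \<phi> 1 "d t * l" a1] phi1 phia1 a1_lt cont by auto
  have xsp: "xs > 0" using xs a1 by simp
  have the: "(THE x. 0 < x \<and> x \<le> 1 \<and> \<theta> t * u' t x - \<beta> t * c t * e' t (x * c t) = d t * l) = xs"
  proof (rule the_equality)
    show "0 < xs \<and> xs \<le> 1 \<and> \<theta> t * u' t xs - \<beta> t * c t * e' t (xs * c t) = d t * l"
      using xs xsp unfolding \<phi>_def by simp
  next
    fix y assume y: "0 < y \<and> y \<le> 1 \<and> \<theta> t * u' t y - \<beta> t * c t * e' t (y * c t) = d t * l"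
    hence py: "\<phi> y = \<phi> xs" using xs unfolding \<phi>_def by simp
    show "y = xs"
    proof (rule ccontr)
      assume "y \<noteq> xs"
      hence "y < xs \<or> xs < y" by linarith
      thus False using phidec[of y xs] phidec[of xs y] y xsp py by auto
    qed
  qed
  have xa: "xs \<le> a"
  proof (rule ccontr)
    assume "\<not> xs \<le> a" hence axs: "a < xs" by simp
    have "u' t xs < u' t a" using u'_less a0 axs by simp
    hence 1: "\<theta> t * u' t xs < \<theta> t * u' t a" using th by simp
    have "AA l < xs * c t" using mult_strict_right_mono[OF axs c] a_c[of l] unfolding a_def by simp
    hence "e' t (AA l) < e' t (xs * c t)"
      using e'_less[of "AA l" "xs * c t"] AA(1)[OF l] by simp
    hence "\<beta> t * c t * e' t (AA l) < \<beta> t * c t * e' t (xs * c t)" using b c by simp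
    hence "K l < \<beta> t * c t * e' t (xs * c t)" using K_AA[OF l] by simp
    hence "X < \<theta> t * u' t xs" using xs(3) unfolding \<phi>_def X_def X_eq by simp
    hence "X < \<theta> t * u' t a" using 1 by simp
    hence "X / u' t a < \<theta> t" using ua by (simp add: divide_less_eq mult.commute)
    thus False using O1 by simp
  qed
  have "xs * c t \<le> AA l" using mult_right_mono[OF xa, of "c t"] c a_c[of l] unfolding a_def by simp
  hence "e' t (xs * c t) \<le> e' t (AA l)"
    using e'_mono[of "xs * c t" "AA l"] xsp c by simp
  hence "\<beta> t * c t * e' t (xs * c t) \<le> \<beta> t * c t * e' t (AA l)" using b c by simp
  hence Mnn: "K l - \<beta> t * c t * e' t (xs * c t) \<ge> 0" using K_AA[OF l] by simp
  show ?thesis unfolding the opt_def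
  proof (intro conjI allI impI)
    fix x z :: real assume xz: "0 \<le> z \<and> z \<le> x \<and> x \<le> 1"
    have k: "F l x z \<le> F l xs 0 + (\<theta> t * u' t xs - X_fn c p d r t l) * (x - xs)
      + (p t * c t + r t * l - \<beta> t * c t * e' t ((xs - 0) * c t)) * ((x - z) - (xs - 0))"
      by (rule key) (use xz xsp in auto)
    define M where "M = K l - \<beta> t * c t * e' t (xs * c t)"
    have c1: "\<theta> t * u' t xs - X_fn c p d r t l = - M"
      using xs(3) unfolding M_def \<phi>_def X_eq by simp
    have c2: "p t * c t + r t * l - \<beta> t * c t * e' t ((xs - 0) * c t) = M"
      unfolding M_def K_def by simp
    have 3: "- M * (x - xs) + M * ((x - z) - xs) = - (M * z)" by (simp add: algebra_simps)
    have 4: "M * z \<ge> 0" using Mnn xz unfolding M_def by simp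
    show "F l x z \<le> F l xs 0" using k 3 4 unfolding c1 c2 by simp
  qed (use xsp xs in auto)
qed

lemma cover: assumes l: "l \<ge> 0"
  shows "OmegaI u' e' c p d r t l (\<beta> t) (\<theta> t) \<or> OmegaII u' e' c p d r t l (\<beta> t) (\<theta> t)
    \<or> OmegaIII u' e' c p d r t l (\<beta> t) (\<theta> t) \<or> OmegaIV u' e' c p d r t l (\<beta> t) (\<theta> t)"
proof -
  define a where "a = a_fn e' c p r t (\<beta> t) l"
  define X where "X = X_fn c p d r t l"
  have Xp: "X > 0" unfolding X_def using X_pos[OF l] .
  have a0: "a > 0" unfolding a_def a_eq using c AA(1)[OF l] by simp
  have u1: "u' t 1 > 0" using u'_pos by simp
  have ua: "u' t a > 0" using u'_pos a0 by simp
  have ce: "c t * e' t (c t) > 0" using c e'c_pos by simp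
  have Kd: "p t * c t + r t * l = K l" unfolding K_def ..
  show ?thesis
  proof (cases "\<beta> t < K l / (c t * e' t (c t))")
    case True
    hence h2: "\<beta> t * c t * e' t (c t) < K l"
      using ce by (simp add: less_divide_eq mult.commute mult.left_commute)
    have "(\<beta> t * c t) * e' t (c t) < (\<beta> t * c t) * e' t (AA l)" using h2 K_AA[OF l] by simp
    hence "e' t (c t) < e' t (AA l)" using b c by (metis mult_less_cancel_left_pos mult_pos_pos)
    hence "c t < AA l" using e'_mono[of "AA l" "c t"] AA(1)[OF l] by force
    hence a1: "1 < a" unfolding a_def a_eq using c by simp
    hence "u' t a < u' t 1" using u'_less by simp
    hence q1: "X / u' t 1 < X / u' t a" using Xp ua by (simp add: divide_strict_left_mono)
    have q2: "(\<beta> t * c t * e' t (c t) + d t * l) / u' t 1 < X / u' t 1"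
      using h2 u1 unfolding X_def X_eq by (simp add: divide_strict_right_mono)
    show ?thesis
    proof (cases "\<theta> t > (\<beta> t * c t * e' t (c t) + d t * l) / u' t 1")
      case True thus ?thesis unfolding OmegaI_def using b h2 \<open>\<beta> t < K l / (c t * e' t (c t))\<close> Kd by simp
    next
      case False
      hence "\<theta> t < X / u' t a" using q1 q2 by linarith
      thus ?thesis unfolding OmegaIV_def X_def a_def using False b by simp
    qed
  next
    case False
    hence h2: "\<beta> t * c t * e' t (c t) \<ge> K l"
      using ce by (simp add: less_divide_eq mult.commute mult.left_commute)
    have "(\<beta> t * c t) * e' t (AA l) \<le> (\<beta> t * c t) * e' t (c t)" using h2 K_AA[OF l] by simp
    hence "e' t (AA l) \<le> e' t (c t)" using b c by (metis mult_le_cancel_left_pos mult_pos_pos)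
    hence "AA l \<le> c t" using e'_le_imp AA(1)[OF l] c by simp
    hence a1: "a \<le> 1" unfolding a_def a_eq using c by simp
    hence "u' t 1 \<le> u' t a" using u'_anti a0 by simp
    hence q1: "X / u' t a \<le> X / u' t 1" using Xp ua u1 by (simp add: divide_left_mono)
    have q2: "X / u' t 1 \<le> (\<beta> t * c t * e' t (c t) + d t * l) / u' t 1"
      using h2 u1 unfolding X_def X_eq by (simp add: divide_right_mono)
    show ?thesis
    proof (cases "\<theta> t > X / u' t 1")
      case True thus ?thesis unfolding OmegaII_def X_def using b False Kd by simp
    next
      case F2: False
      show ?thesis
      proof (cases "X / u' t a \<le> \<theta> t")
        case True thus ?thesis using b F2 unfolding OmegaIII_def X_def a_def by simp
      next
        case False
        hence "\<theta> t \<le> (\<beta> t * c t * e' t (c t) + d t * l) / u' t 1" using q1 q2 by linarith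
        thus ?thesis using False b unfolding OmegaIV_def X_def a_def by simp
      qed
    qed
  qed
qed

lemma W_opt: assumes l: "l \<ge> 0"
  shows "opt l (fst (W_fn u' e' c p d r \<theta> \<beta> t l)) (snd (W_fn u' e' c p d r \<theta> \<beta> t l))"
  using cover[OF l] regI[OF l] regII[OF l] regIII[OF l] regIV[OF l]
  unfolding W_fn_def by auto

end


lemma proj_bounds: "fee > 0 \<Longrightarrow> 0 \<le> proj fee v \<and> proj fee v \<le> fee"
  unfolding proj_def by auto

lemma proj_nonexp: "0 \<le> lam \<Longrightarrow> lam \<le> fee \<Longrightarrow> \<bar>proj fee v - lam\<bar> \<le> \<bar>v - lam\<bar>"
  unfolding proj_def by (auto simp: abs_if max_def min_def)

lemma telescope:
  fixes a eta :: "nat \<Rightarrow> real" and B :: real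
  assumes a: "\<And>k. 0 \<le> a k \<and> a k \<le> B" and eta: "\<And>k. 1 \<le> k \<Longrightarrow> k \<le> T \<Longrightarrow> eta k > 0"
    and mono: "\<And>k. 1 \<le> k \<Longrightarrow> k < T \<Longrightarrow> eta (Suc k) \<le> eta k"
  shows "1 \<le> n \<Longrightarrow> n \<le> T \<Longrightarrow> (\<Sum>k=1..n. (a (k - 1) - a k) / eta k) \<le> (B - a n) / eta n"
proof (induction n)
  case 0 thus ?case by simp
next
  case (Suc n)
  show ?case
  proof (cases "n = 0")
    case True
    have "a 0 \<le> B" using a by blast
    hence "a 0 - a 1 \<le> B - a 1" by simp
    thus ?thesis using True eta[of 1] Suc.prems by (simp add: divide_right_mono)
  next
    case False
    hence IH: "(\<Sum>k=1..n. (a (k - 1) - a k) / eta k) \<le> (B - a n) / eta n" using Suc by simp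
    have en: "eta n > 0" and es: "eta (Suc n) > 0" using eta Suc.prems False by auto
    have le: "eta (Suc n) \<le> eta n" using mono[of n] Suc.prems False by simp
    have "(B - a n) / eta n \<le> (B - a n) / eta (Suc n)"
      using a[of n] en es le by (intro divide_left_mono) auto
    hence "(\<Sum>k=1..Suc n. (a (k - 1) - a k) / eta k) \<le> (B - a n) / eta (Suc n) + (a n - a (Suc n)) / eta (Suc n)"
      using IH by simp
    also have "\<dots> = (B - a (Suc n)) / eta (Suc n)" by (simp add: diff_divide_distrib)
    finally show ?thesis .
  qed
qed

lemma abel:
  fixes L m :: "nat \<Rightarrow> real"
  shows "(\<Sum>t=1..n. L (t - 1) * m t) = L n * (\<Sum>i=1..n. m i) - (\<Sum>t=1..n. (L t - L (t - 1)) * (\<Sum>i=1..t. m i))"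
proof (induction n)
  case 0 thus ?case by simp
next
  case (Suc n)
  show ?case using Suc by (simp add: algebra_simps)
qed

theorem theorem2:
  fixes T :: nat and Q fee dbar rbar :: real
    and d r c p \<theta> \<beta> :: "nat \<Rightarrow> real"
    and u e u' e' :: "nat \<Rightarrow> real \<Rightarrow> real"
    and xs zs :: "nat \<Rightarrow> real"
  assumes T: "T \<ge> 1" and Q: "Q > 0" and fee: "fee > 0"
    and dbar: "dbar \<ge> 0" and rbar: "rbar \<ge> 0"
    and d: "\<forall>t\<in>{1..T}. 0 \<le> d t \<and> d t \<le> dbar"
    and r: "\<forall>t\<in>{1..T}. 0 \<le> r t \<and> r t \<le> rbar"
    and pos: "\<forall>t\<in>{1..T}. c t > 0 \<and> p t > 0 \<and> \<theta> t > 0 \<and> \<beta> t > 0"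
    and u_cont: "\<forall>t\<in>{1..T}. continuous_on {0..} (u t)"
    and u_mono: "\<forall>t\<in>{1..T}. mono_on {0..} (u t)"
    and u_conc: "\<forall>t\<in>{1..T}. strict_concave_on {0..} (u t)"
    and u_deriv: "\<forall>t\<in>{1..T}. \<forall>x>0. (u t has_real_derivative u' t x) (at x)"
    and u'_dec: "\<forall>t\<in>{1..T}. \<forall>x y. 0 < x \<and> x < y \<longrightarrow> u' t y < u' t x"
    and u'_bij: "\<forall>t\<in>{1..T}. bij_betw (u' t) {0<..} {0<..}"
    and e_mono: "\<forall>t\<in>{1..T}. mono_on {0..} (e t)"
    and e_conv: "\<forall>t\<in>{1..T}. strict_convex_on {0..} (e t)"
    and e_deriv: "\<forall>t\<in>{1..T}. \<forall>x\<ge>0. (e t has_real_derivative e' t x) (at x within {0..})"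
    and e'_cont: "\<forall>t\<in>{1..T}. continuous_on {0..} (e' t)"
    and e'_inc: "\<forall>t\<in>{1..T}. strict_mono_on {0..} (e' t)"
    and e'_bij: "\<forall>t\<in>{1..T}. bij_betw (e' t) {0..} {0..}"
    and opt_feas: "feasible T xs zs"
    and opt_max: "\<forall>x z. feasible T x z \<longrightarrow>
         Spay T Q fee u e c p \<theta> \<beta> d r x z \<le> Spay T Q fee u e c p \<theta> \<beta> d r xs zs"
  shows "(\<forall>\<eta> :: nat \<Rightarrow> real.
            (\<forall>t\<in>{1..T}. \<eta> t > 0) \<and> (\<forall>s\<in>{1..T}. \<forall>t\<in>{1..T}. s \<le> t \<longrightarrow> \<eta> t \<le> \<eta> s) \<longrightarrow>
            gap T Q fee u e u' e' c p d r \<theta> \<beta> \<eta> xs zs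
              \<le> (1 / real T) * (fee\<^sup>2 / 2 * (1 / \<eta> T)
                   + ((Xi T Q dbar rbar)\<^sup>2 / 2 + Xi T Q dbar rbar * Psi T Q d r xs zs)
                     * (\<Sum>t=1..T. \<eta> t)))
       \<and> gap T Q fee u e u' e' c p d r \<theta> \<beta> (\<lambda>_. fee / (Xi T Q dbar rbar * sqrt (real T))) xs zs
           \<le> fee * (Xi T Q dbar rbar + Psi T Q d r xs zs) / sqrt (real T)"
proof -
  have Tpos: "real T > 0" using T by simp
  define q where "q = Q / real T"
  define X0 where "X0 = Xi T Q dbar rbar"
  define P0 where "P0 = Psi T Q d r xs zs"
  have q0: "q > 0" unfolding q_def using Q Tpos by simp
  have X0q: "X0 \<ge> q" unfolding X0_def Xi_def q_def by simp
  have X0p: "X0 > 0" using X0q q0 by simp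
  have main: "\<forall>\<eta> :: nat \<Rightarrow> real.
            (\<forall>t\<in>{1..T}. \<eta> t > 0) \<and> (\<forall>s\<in>{1..T}. \<forall>t\<in>{1..T}. s \<le> t \<longrightarrow> \<eta> t \<le> \<eta> s) \<longrightarrow>
            gap T Q fee u e u' e' c p d r \<theta> \<beta> \<eta> xs zs
              \<le> (1 / real T) * (fee\<^sup>2 / 2 * (1 / \<eta> T)
                   + (X0\<^sup>2 / 2 + X0 * P0) * (\<Sum>t=1..T. \<eta> t))"
  proof (intro allI impI)
    fix \<eta> :: "nat \<Rightarrow> real"
    assume h\<eta>: "(\<forall>t\<in>{1..T}. \<eta> t > 0) \<and> (\<forall>s\<in>{1..T}. \<forall>t\<in>{1..T}. s \<le> t \<longrightarrow> \<eta> t \<le> \<eta> s)"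
    have etap: "\<And>t. t \<in> {1..T} \<Longrightarrow> \<eta> t > 0" using h\<eta> by blast
    define L where "L n = lam_seq T Q fee u' e' c p d r \<theta> \<beta> \<eta> n" for n
    define w where "w t = online_dec T Q fee u' e' c p d r \<theta> \<beta> \<eta> t" for t
    define xh where "xh t = fst (w t)" for t
    define zh where "zh t = snd (w t)" for t
    define g where "g t = hfun d r t (xh t) (zh t) - q" for t
    define l where "l t = q - hfun d r t (xs t) (zs t)" for t
    define lbar where "lbar = (\<Sum>t=1..T. l t) / real T"
    have Lb: "0 \<le> L n \<and> L n \<le> fee" for n
    proof (cases n)
      case 0 thus ?thesis unfolding L_def using fee by simp
    next
      case (Suc m) thus ?thesis unfolding L_def using proj_bounds[OF fee] by (simp add: Let_def)
    qed
    have wL: "w t = W_fn u' e' c p d r \<theta> \<beta> t (L (t - 1))" for t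
      unfolding w_def online_dec_def L_def ..
    have Lstep: "L t = proj fee (L (t - 1) + \<eta> t * g t)" if t1: "t \<ge> 1" for t
    proof -
      obtain n where n: "t = Suc n" using t1 by (cases t) auto
      have "L (Suc n) = proj fee (L n + \<eta> (Suc n) * (hfun d r (Suc n)
          (fst (W_fn u' e' c p d r \<theta> \<beta> (Suc n) (L n))) (snd (W_fn u' e' c p d r \<theta> \<beta> (Suc n) (L n))) - Q / real T))"
        unfolding L_def by (simp add: Let_def)
      thus ?thesis unfolding n g_def xh_def zh_def wL q_def by simp
    qed
    have opt: "0 \<le> zh t \<and> zh t \<le> xh t \<and> xh t \<le> 1 \<and> (\<forall>x z. 0 \<le> z \<and> z \<le> x \<and> x \<le> 1 \<longrightarrow>
        ffun u e c p \<theta> \<beta> t x z - L (t - 1) * hfun d r t x z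
          \<le> ffun u e c p \<theta> \<beta> t (xh t) (zh t) - L (t - 1) * hfun d r t (xh t) (zh t))"
      if t: "t \<in> {1..T}" for t
    proof -
      interpret per_t u e u' e' c p \<theta> \<beta> d r t
        by unfold_locales (use t pos d r u_conc u_deriv u'_dec u'_bij e_mono e_conv e_deriv e'_cont e'_inc e'_bij in auto)
      have "opt (L (t - 1)) (fst (W_fn u' e' c p d r \<theta> \<beta> t (L (t - 1)))) (snd (W_fn u' e' c p d r \<theta> \<beta> t (L (t - 1))))"
        by (rule W_opt) (use Lb in auto)
      thus ?thesis unfolding opt_def F_def xh_def zh_def wL by simp
    qed
    have feas: "0 \<le> zs t \<and> zs t \<le> xs t \<and> xs t \<le> 1" if "t \<in> {1..T}" for t
      using opt_feas that unfolding feasible_def by blast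
    have gb: "\<bar>g t\<bar> \<le> X0" if t: "t \<in> {1..T}" for t
    proof -
      have o: "0 \<le> zh t" "zh t \<le> xh t" "xh t \<le> 1" using opt[OF t] by auto
      have dd: "0 \<le> d t" "d t \<le> dbar" and rr: "0 \<le> r t" "r t \<le> rbar" using d r t by auto
      have 1: "d t * xh t \<le> d t * 1" using dd o by (intro mult_left_mono) auto
      have 2: "r t * zh t \<le> r t * 1" using rr o by (intro mult_left_mono) auto
      have 3: "0 \<le> d t * xh t" "0 \<le> r t * zh t" using dd rr o by auto
      have hb: "0 \<le> hfun d r t (xh t) (zh t)" "hfun d r t (xh t) (zh t) \<le> dbar + rbar"
        unfolding hfun_def using 1 2 3 dd rr by auto
      have "dbar + rbar - q \<le> \<bar>q - dbar - rbar\<bar>" by simp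
      hence "g t \<le> X0" unfolding g_def X0_def Xi_def q_def[symmetric] using hb by simp
      moreover have "- g t \<le> X0" unfolding g_def using hb X0q by simp
      ultimately show ?thesis by simp
    qed
    have Ldiff: "\<bar>L t - L (t - 1)\<bar> \<le> \<eta> t * X0" if t: "t \<in> {1..T}" for t
    proof -
      have Lt: "L t = proj fee (L (t - 1) + \<eta> t * g t)" using Lstep t by simp
      have "\<bar>L t - L (t - 1)\<bar> \<le> \<bar>L (t - 1) + \<eta> t * g t - L (t - 1)\<bar>"
        unfolding Lt using Lb[of "t - 1"] by (intro proj_nonexp) auto
      also have "\<dots> = \<eta> t * \<bar>g t\<bar>" using etap[OF t] by (simp add: abs_mult)
      also have "\<dots> \<le> \<eta> t * X0" using etap[OF t] gb[OF t] by (intro mult_left_mono) auto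
      finally show ?thesis .
    qed
    have reg: "(\<Sum>t=1..T. (lam - L (t - 1)) * g t) \<le> fee\<^sup>2 / 2 * (1 / \<eta> T) + X0\<^sup>2 / 2 * (\<Sum>t=1..T. \<eta> t)"
      if lam: "0 \<le> lam" "lam \<le> fee" for lam
    proof -
      have step: "(lam - L (t - 1)) * g t \<le> ((L (t - 1) - lam)\<^sup>2 - (L t - lam)\<^sup>2) / (2 * \<eta> t) + \<eta> t * X0\<^sup>2 / 2"
        if t: "t \<in> {1..T}" for t
      proof -
        define a where "a = L (t - 1) - lam"
        define b where "b = L t - lam"
        define E where "E = \<eta> t"
        define G where "G = g t"
        have Ep: "E > 0" unfolding E_def using etap[OF t] .
        have Lt: "L t = proj fee (L (t - 1) + \<eta> t * g t)" using Lstep t by simp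
        have "\<bar>L t - lam\<bar> \<le> \<bar>L (t - 1) + \<eta> t * g t - lam\<bar>"
          unfolding Lt using lam by (intro proj_nonexp) auto
        hence "\<bar>b\<bar> \<le> \<bar>a + E * G\<bar>"
          unfolding a_def b_def E_def G_def by (simp add: algebra_simps)
        hence sq: "b\<^sup>2 \<le> (a + E * G)\<^sup>2" by (simp add: abs_le_square_iff)
        have GG: "G\<^sup>2 \<le> X0\<^sup>2" using gb[OF t] unfolding G_def using abs_le_square_iff[of "g t" X0] X0p by simp
        have "(a\<^sup>2 - b\<^sup>2) / (2 * E) \<ge> (- 2 * E * a * G - E\<^sup>2 * G\<^sup>2) / (2 * E)"
          using sq Ep by (intro divide_right_mono) (auto simp: power2_eq_square algebra_simps)
        moreover have "(- 2 * E * a * G - E\<^sup>2 * G\<^sup>2) / (2 * E) = - (a * G) - E * G\<^sup>2 / 2"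
          using Ep by (simp add: field_simps power2_eq_square)
        moreover have "E * G\<^sup>2 / 2 \<le> E * X0\<^sup>2 / 2" using GG Ep by simp
        ultimately have "- a * G \<le> (a\<^sup>2 - b\<^sup>2) / (2 * E) + E * X0\<^sup>2 / 2" by simp
        thus ?thesis unfolding a_def b_def E_def G_def by (simp add: power2_commute algebra_simps)
      qed
      have "(\<Sum>t=1..T. (lam - L (t - 1)) * g t) \<le>
          (\<Sum>t=1..T. ((L (t - 1) - lam)\<^sup>2 - (L t - lam)\<^sup>2) / (2 * \<eta> t) + \<eta> t * X0\<^sup>2 / 2)"
        by (rule sum_mono) (rule step)
      also have "\<dots> = (\<Sum>t=1..T. ((L (t - 1) - lam)\<^sup>2 - (L t - lam)\<^sup>2) / (2 * \<eta> t)) + X0\<^sup>2 / 2 * (\<Sum>t=1..T. \<eta> t)"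
        by (simp add: sum.distrib sum_distrib_left sum_divide_distrib mult.commute)
      also have "(\<Sum>t=1..T. ((L (t - 1) - lam)\<^sup>2 - (L t - lam)\<^sup>2) / (2 * \<eta> t)) \<le> (fee\<^sup>2 - (L T - lam)\<^sup>2) / (2 * \<eta> T)"
      proof -
        have A1: "0 \<le> (L k - lam)\<^sup>2 \<and> (L k - lam)\<^sup>2 \<le> fee\<^sup>2" for k
        proof -
          have "\<bar>L k - lam\<bar> \<le> \<bar>fee\<bar>" using Lb[of k] lam fee by auto
          thus ?thesis by (simp add: abs_le_square_iff)
        qed
        have A2: "1 \<le> k \<Longrightarrow> k \<le> T \<Longrightarrow> 2 * \<eta> k > 0" for k using etap by auto
        have A3: "1 \<le> k \<Longrightarrow> k < T \<Longrightarrow> 2 * \<eta> (Suc k) \<le> 2 * \<eta> k" for k using h\<eta> by auto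
        show ?thesis
          using telescope[where a = "\<lambda>k. (L k - lam)\<^sup>2" and eta = "\<lambda>k. 2 * \<eta> k" and B = "fee\<^sup>2"
              and T = T and n = T, OF A1 A2 A3] T by simp
      qed
      also have "(fee\<^sup>2 - (L T - lam)\<^sup>2) / (2 * \<eta> T) \<le> fee\<^sup>2 / 2 * (1 / \<eta> T)"
        using etap[of T] T by (simp add: divide_right_mono)
      finally show ?thesis by simp
    qed
    define m where "m t = l t - lbar" for t
    define D where "D n = (\<Sum>i=1..n. m i)" for n
    have Dn: "D n = (\<Sum>i=1..n. l i) - real n * lbar" for n
      unfolding D_def m_def by (simp add: sum_subtractf)
    have DT: "D T = 0" unfolding Dn lbar_def using Tpos by simp
    have Db: "\<bar>D t\<bar> \<le> P0" if t: "t \<in> {1..T}" for t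
    proof -
      have "\<bar>real t * lbar - (\<Sum>i=1..t. l i)\<bar> \<in> (\<lambda>t. \<bar>real t * lbar - (\<Sum>i=1..t. l i)\<bar>) ` {1..T}"
        using t by blast
      hence "\<bar>real t * lbar - (\<Sum>i=1..t. l i)\<bar> \<le> P0"
        unfolding P0_def Psi_def Let_def lbar_def l_def q_def by (intro Max_ge) auto
      thus ?thesis unfolding Dn by (simp add: abs_minus_commute)
    qed
    have ab: "(\<Sum>t=1..T. L (t - 1) * m t) = - (\<Sum>t=1..T. (L t - L (t - 1)) * D t)"
      using abel[of L m T] DT unfolding D_def by simp
    have "(\<Sum>t=1..T. (L t - L (t - 1)) * D t) \<le> (\<Sum>t=1..T. \<eta> t * X0 * P0)"
    proof (rule sum_mono)
      fix t assume t: "t \<in> {1..T}"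
      have "(L t - L (t - 1)) * D t \<le> \<bar>L t - L (t - 1)\<bar> * \<bar>D t\<bar>" by (simp add: abs_mult[symmetric])
      also have "\<dots> \<le> (\<eta> t * X0) * P0" using Ldiff[OF t] Db[OF t] by (intro mult_mono) auto
      finally show "(L t - L (t - 1)) * D t \<le> \<eta> t * X0 * P0" .
    qed
    hence fluct: "(\<Sum>t=1..T. L (t - 1) * m t) \<ge> - (X0 * P0 * (\<Sum>t=1..T. \<eta> t))"
      unfolding ab by (simp add: sum_distrib_left sum_distrib_right mult.commute mult.left_commute)
    have sumq: "(\<Sum>t=1..T. q) = Q" unfolding q_def using Tpos by simp
    have suml: "(\<Sum>t=1..T. l t) = real T * lbar" unfolding lbar_def using Tpos by simp
    have meanpart: "(\<Sum>t=1..T. L (t - 1) * lbar) \<ge> - fee * max 0 (- (\<Sum>t=1..T. l t))"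
    proof (cases "lbar \<ge> 0")
      case True
      have "(\<Sum>t=1..T. L (t - 1) * lbar) \<ge> 0" using Lb True by (intro sum_nonneg) auto
      moreover have "- fee * max 0 (- (\<Sum>t=1..T. l t)) \<le> 0" using fee by simp
      ultimately show ?thesis by linarith
    next
      case False
      have "(\<Sum>t=1..T. L (t - 1) * lbar) \<ge> (\<Sum>t=1..T. fee * lbar)"
        using Lb False by (intro sum_mono mult_right_mono_neg) auto
      moreover have "(\<Sum>t=1..T. fee * lbar) = fee * (\<Sum>t=1..T. l t)"
      proof -
        have "(\<Sum>t=1..T. fee * lbar) = real T * (fee * lbar)" by simp
        also have "\<dots> = fee * (real T * lbar)" by simp
        finally show ?thesis using suml by simp
      qed
      moreover have "max 0 (- (\<Sum>t=1..T. l t)) = - (\<Sum>t=1..T. l t)" using False Tpos unfolding suml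
        by (simp add: mult_pos_neg)
      ultimately show ?thesis by linarith
    qed
    define fs where "fs t = ffun u e c p \<theta> \<beta> t (xs t) (zs t)" for t
    define fh where "fh t = ffun u e c p \<theta> \<beta> t (xh t) (zh t)" for t
    have per: "fh t - L (t - 1) * g t \<ge> fs t + L (t - 1) * l t" if t: "t \<in> {1..T}" for t
    proof -
      have "fs t - L (t - 1) * hfun d r t (xs t) (zs t) \<le> fh t - L (t - 1) * hfun d r t (xh t) (zh t)"
        using opt[OF t] feas[OF t] unfolding fs_def fh_def by blast
      thus ?thesis unfolding g_def l_def by (simp add: algebra_simps)
    qed
    have sum_per: "(\<Sum>t=1..T. fh t) - (\<Sum>t=1..T. L (t - 1) * g t) \<ge> (\<Sum>t=1..T. fs t) + (\<Sum>t=1..T. L (t - 1) * l t)"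
    proof -
      have "(\<Sum>t=1..T. fs t + L (t - 1) * l t) \<le> (\<Sum>t=1..T. fh t - L (t - 1) * g t)"
        by (rule sum_mono) (rule per)
      thus ?thesis by (simp add: sum.distrib sum_subtractf)
    qed
    have Ll: "(\<Sum>t=1..T. L (t - 1) * l t) = (\<Sum>t=1..T. L (t - 1) * lbar) + (\<Sum>t=1..T. L (t - 1) * m t)"
      unfolding m_def by (simp add: sum.distrib[symmetric] algebra_simps)
    have Sstar: "Spay T Q fee u e c p \<theta> \<beta> d r xs zs = (\<Sum>t=1..T. fs t) - fee * max 0 (- (\<Sum>t=1..T. l t))"
    proof -
      have "(\<Sum>t=1..T. hfun d r t (xs t) (zs t)) - Q = - (\<Sum>t=1..T. l t)"
        unfolding l_def sumq[symmetric] by (simp add: sum_subtractf)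
      thus ?thesis unfolding Spay_def fs_def by simp
    qed
    have Shat: "Spay T Q fee u e c p \<theta> \<beta> d r
          (\<lambda>t. fst (online_dec T Q fee u' e' c p d r \<theta> \<beta> \<eta> t))
          (\<lambda>t. snd (online_dec T Q fee u' e' c p d r \<theta> \<beta> \<eta> t))
        = (\<Sum>t=1..T. fh t) - fee * max 0 (\<Sum>t=1..T. g t)"
    proof -
      have "(\<Sum>t=1..T. hfun d r t (xh t) (zh t)) - Q = (\<Sum>t=1..T. g t)"
        unfolding g_def sumq[symmetric] by (simp add: sum_subtractf)
      thus ?thesis unfolding Spay_def fh_def xh_def zh_def w_def by simp
    qed
    define ls where "ls = (if (\<Sum>t=1..T. g t) \<ge> 0 then fee else 0)"
    have ls: "0 \<le> ls" "ls \<le> fee" unfolding ls_def using fee by auto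
    have pen: "fee * max 0 (\<Sum>t=1..T. g t) = (\<Sum>t=1..T. ls * g t)"
      unfolding ls_def sum_distrib_left[symmetric] by auto
    have r1: "(\<Sum>t=1..T. ls * g t) - (\<Sum>t=1..T. L (t - 1) * g t)
        \<le> fee\<^sup>2 / 2 * (1 / \<eta> T) + X0\<^sup>2 / 2 * (\<Sum>t=1..T. \<eta> t)"
      using reg[OF ls] by (simp add: sum_subtractf[symmetric] left_diff_distrib)
    define R where "R = fee\<^sup>2 / 2 * (1 / \<eta> T) + (X0\<^sup>2 / 2 + X0 * P0) * (\<Sum>t=1..T. \<eta> t)"
    have diff: "Spay T Q fee u e c p \<theta> \<beta> d r xs zs - Spay T Q fee u e c p \<theta> \<beta> d r
          (\<lambda>t. fst (online_dec T Q fee u' e' c p d r \<theta> \<beta> \<eta> t))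
          (\<lambda>t. snd (online_dec T Q fee u' e' c p d r \<theta> \<beta> \<eta> t)) \<le> R"
      unfolding Sstar Shat pen R_def using r1 sum_per Ll fluct meanpart by (simp add: algebra_simps)
    show "gap T Q fee u e u' e' c p d r \<theta> \<beta> \<eta> xs zs
              \<le> (1 / real T) * (fee\<^sup>2 / 2 * (1 / \<eta> T)
                   + (X0\<^sup>2 / 2 + X0 * P0) * (\<Sum>t=1..T. \<eta> t))"
      unfolding gap_def R_def[symmetric] using diff Tpos by (simp add: divide_right_mono)
  qed
  have part2: "gap T Q fee u e u' e' c p d r \<theta> \<beta> (\<lambda>_. fee / (X0 * sqrt (real T))) xs zs
           \<le> fee * (X0 + P0) / sqrt (real T)"
  proof -
    define s where "s = sqrt (real T)"
    have sp: "s > 0" unfolding s_def using Tpos by simp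
    have ss: "real T = s * s" unfolding s_def using Tpos by simp
    define et where "et = fee / (X0 * s)"
    have etp: "et > 0" unfolding et_def using fee X0p sp by simp
    have "gap T Q fee u e u' e' c p d r \<theta> \<beta> (\<lambda>_. et) xs zs
        \<le> (1 / real T) * (fee\<^sup>2 / 2 * (1 / et) + (X0\<^sup>2 / 2 + X0 * P0) * (\<Sum>t=1..T. et))"
      using main[rule_format, of "\<lambda>_. et"] etp by simp
    also have "\<dots> = fee * (X0 + P0) / s"
      unfolding ss et_def using sp X0p fee by (simp add: field_simps power2_eq_square ss)
    finally show ?thesis unfolding et_def s_def .
  qed
  show ?thesis using main part2 unfolding X0_def P0_def by blast
qed


end
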